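(* Let $r\geq 2$, $0<c\leq 1/2$, let $H$ be a graph with vertex set $\{v_1,\ldots,v_r\}$, and let $G$ be a graph of order $n$. If $M\subset H(G)$ and $|M|\geq cn^{r}$, then $M$ covers an induced subgraph of $G$ of type $H(s,\ldots,s,t)$ with $s=\lfloor c^{r^{2}}\ln n\rfloor$ and $t$ an integer with $t>n^{1-c^{r-1}}$.
   Context: $H(G)$ is the set of injections $h:V(H)\to V(G)$ such that for all distinct $u,v\in V(H)$, $\{u,v\}\in E(H)$ if and only if $\{h(u),h(v)\}\in E(G)$. For a graph $H$ with vertices $v_1,\ldots,v_r$ and positive integers $x_1,\ldots,x_r$, $H(x_1,\ldots,x_r)$ denotes the graph obtained by replacing each vertex $v_i$ with a set $V_{v_i}$ of $x_i$ vertices (pairwise disjoint, each independent) and each edge $v_iv_j\in E(H)$ with a complete bipartite graph between $V_{v_i}$ and $V_{v_j}$. A graph is of type $H(x_1,\ldots,x_r)$ if it is obtained from $H(x_1,\ldots,x_r)$ by adding some edges within the sets $V_{v_i}$; in $H(s,\ldots,s,t)$ the classes of $v_1,\ldots,v_{r-1}$ have size $s$ and that of $v_r$ has size $t$. Let $Y$ be a subgraph of $G$ of type $H(s_1,\ldots,s_r)$ with designated vertex classes, and let $s=\min\{s_1,\ldots,s_r\}$. A set $M\subset H(G)$ covers $Y$ if: (a) for every edge $ij$ of $Y$ joining two different vertex classes of $Y$, there exist $h\in M$ and an edge $uv\in E(H)$ with $\{h(u),h(v)\}=\{i,j\}$; and (b) there exist $h_1,\ldots,h_s\in M$ such that the images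 $h_i(V(H))$ are pairwise disjoint for $i\neq j$ and, for every $i\in[s]$, $h_i(V(H))$ intersects every vertex class of $Y$. $\ln$ is the natural logarithm. *)

theory Defs
  imports "HOL-Analysis.Analysis" "HOL-Library.FuncSet"
begin

text \<open>A (simple) graph: finite vertex set V with a symmetric irreflexive adjacency
  relation E (only its restriction to V matters).\<close>
definition graph :: "'a set \<Rightarrow> ('a \<Rightarrow> 'a \<Rightarrow> bool) \<Rightarrow> bool" where
  "graph V E \<longleftrightarrow> finite V \<and> (\<forall>x\<in>V. \<forall>y\<in>V. E x y \<longleftrightarrow> E y x) \<and> (\<forall>x\<in>V. \<not> E x x)"

text \<open>H has vertex set {0..<r} (vertex v_i is i-1), adjacency EH.
  Maps are extensional so that distinct elements of H(G) are distinct functions.\<close>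
definition induced_copies ::
  "nat \<Rightarrow> (nat \<Rightarrow> nat \<Rightarrow> bool) \<Rightarrow> 'a set \<Rightarrow> ('a \<Rightarrow> 'a \<Rightarrow> bool) \<Rightarrow> (nat \<Rightarrow> 'a) set" where
  "induced_copies r EH V E =
     {h \<in> {0..<r} \<rightarrow>\<^sub>E V. inj_on h {0..<r} \<and>
        (\<forall>u<r. \<forall>v<r. u \<noteq> v \<longrightarrow> (EH u v \<longleftrightarrow> E (h u) (h v)))}"

text \<open>X :: nat \<Rightarrow> 'a set gives the designated vertex classes X 0, ..., X (r-1)
  (class of v_{i+1} is X i). Edges inside classes are arbitrary (those of G).\<close>
definition induced_of_type ::
  "nat \<Rightarrow> (nat \<Rightarrow> nat \<Rightarrow> bool) \<Rightarrow> 'a set \<Rightarrow> ('a \<Rightarrow> 'a \<Rightarrow> bool) \<Rightarrow> (nat \<Rightarrow> nat) \<Rightarrow> (nat \<Rightarrow> 'a set) \<Rightarrow> bool" where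
  "induced_of_type r EH V E sz X \<longleftrightarrow>
     (\<forall>i<r. X i \<subseteq> V \<and> finite (X i) \<and> card (X i) = sz i) \<and>
     (\<forall>i<r. \<forall>j<r. i \<noteq> j \<longrightarrow> X i \<inter> X j = {}) \<and>
     (\<forall>i<r. \<forall>j<r. i \<noteq> j \<longrightarrow> (\<forall>x\<in>X i. \<forall>y\<in>X j. E x y \<longleftrightarrow> EH i j))"

definition covers ::
  "nat \<Rightarrow> (nat \<Rightarrow> nat \<Rightarrow> bool) \<Rightarrow> ('a \<Rightarrow> 'a \<Rightarrow> bool) \<Rightarrow> (nat \<Rightarrow> 'a) set \<Rightarrow> (nat \<Rightarrow> nat) \<Rightarrow> (nat \<Rightarrow> 'a set) \<Rightarrow> bool" where
  "covers r EH E M sz X \<longleftrightarrow>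
     (\<forall>a<r. \<forall>b<r. a \<noteq> b \<longrightarrow> (\<forall>x\<in>X a. \<forall>y\<in>X b. E x y \<longrightarrow>
        (\<exists>h\<in>M. \<exists>u<r. \<exists>v<r. EH u v \<and> {h u, h v} = {x, y}))) \<and>
     (\<exists>f :: nat \<Rightarrow> nat \<Rightarrow> 'a. (\<forall>k < Min (sz ` {0..<r}). f k \<in> M) \<and>
        (\<forall>k < Min (sz ` {0..<r}). \<forall>l < Min (sz ` {0..<r}). k \<noteq> l \<longrightarrow>
            f k ` {0..<r} \<inter> f l ` {0..<r} = {}) \<and>
        (\<forall>k < Min (sz ` {0..<r}). \<forall>a<r. f k ` {0..<r} \<inter> X a \<noteq> {}))"

end

theory Submission
  imports Defs
begin


lemma convex_pow_nonneg: "convex_on {0::real..} (\<lambda>x. x ^ m)"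
proof (cases "even m")
  case True
  then show ?thesis using convex_power_even convex_on_subset by (metis convex_real_interval(1) subset_UNIV)
next
  case False
  then show ?thesis using convex_power_odd by blast
qed

lemma power_mean:
  fixes y :: "'b \<Rightarrow> real"
  assumes "finite S" "S \<noteq> {}" "\<forall>i\<in>S. 0 \<le> y i"
  shows "real (card S) * ((\<Sum>i\<in>S. y i) / card S) ^ m \<le> (\<Sum>i\<in>S. y i ^ m)"
proof -
  let ?N = "real (card S)"
  have N: "?N > 0" using assms by auto
  have "((\<Sum>i\<in>S. (1/?N) *\<^sub>R y i)) ^ m \<le> (\<Sum>i\<in>S. (1/?N) * (y i ^ m))"
    using convex_on_sum[OF assms(1,2) convex_pow_nonneg, of "\<lambda>i. 1/?N" y] assms N by auto
  moreover have "(\<Sum>i\<in>S. (1/?N) *\<^sub>R y i) = (\<Sum>i\<in>S. y i) / ?N"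
    by (simp add: sum_divide_distrib)
  moreover have "(\<Sum>i\<in>S. (1/?N) * (y i ^ m)) = (\<Sum>i\<in>S. y i ^ m) / ?N"
    by (simp add: sum_divide_distrib)
  ultimately have "((\<Sum>i\<in>S. y i) / ?N) ^ m \<le> (\<Sum>i\<in>S. y i ^ m) / ?N" by simp
  then have "?N * ((\<Sum>i\<in>S. y i) / ?N) ^ m \<le> ?N * ((\<Sum>i\<in>S. y i ^ m) / ?N)"
    using N by (intro mult_left_mono) auto
  then show ?thesis using N by simp
qed

lemma choose_lower:
  assumes "m \<ge> 1"
  shows "(max (real d - (real m - 1)) 0) ^ m \<le> real (d choose m) * fact m"
proof (cases "d + 1 \<ge> m")
  case False
  then have "max (real d - (real m - 1)) 0 = 0" by auto
  then show ?thesis using assms by (simp add: zero_power)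
next
  case True
  have "real (d choose m) * fact m = (\<Prod>i = 0..<m. real d - of_nat i)"
    using gbinomial_mult_fact'[of "real d" m] by (simp add: binomial_gbinomial)
  also have "\<dots> \<ge> (\<Prod>i = 0..<m. real d - (real m - 1))"
    by (rule prod_mono) (use True in auto)
  finally show ?thesis using True by auto
qed

lemma card_filter_sum: "finite A \<Longrightarrow> card {x\<in>A. P x} = (\<Sum>x\<in>A. if P x then 1 else 0::nat)"
proof -
  assume "finite A"
  moreover have "{x\<in>A. P x} = A \<inter> Collect P" by auto
  ultimately show ?thesis by (simp add: sum.If_cases)
qed

lemma kst:
  fixes A :: "'b set" and V :: "'a set" and N :: "'b \<Rightarrow> 'a set" and e :: real
  assumes fA: "finite A" and fV: "finite V" and NV: "\<forall>x\<in>A. N x \<subseteq> V"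
    and Nbig: "\<forall>x\<in>A. e * card V \<le> card (N x)" and m1: "1 \<le> m" and ma: "m \<le> card A"
    and me: "real m - 1 \<le> e * card A"
  shows "\<exists>J. J \<subseteq> A \<and> card J = m \<and>
     real (card V) * (e - (real m - 1) / card A) ^ m \<le> card {w\<in>V. \<forall>x\<in>J. w \<in> N x}"
proof (cases "V = {}")
  case True
  obtain J where "J \<subseteq> A" "card J = m" using obtain_subset_with_card_n[OF ma] by blast
  then show ?thesis using True by auto
next
  case False
  define n where "n = card V"
  define a where "a = card A"
  have npos: "n > 0" using False fV n_def by (simp add: card_gt_0_iff)
  have apos: "a > 0" using ma m1 a_def by auto
  define JJ where "JJ = {J. J \<subseteq> A \<and> card J = m}"
  have finJJ: "finite JJ" proof -
    have "JJ \<subseteq> Pow A" unfolding JJ_def by auto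
    then show ?thesis using fA finite_subset by blast
  qed
  have cardJJ: "card JJ = a choose m" unfolding JJ_def a_def using n_subsets[OF fA] by simp
  define T where "T J = {w\<in>V. \<forall>x\<in>J. w \<in> N x}" for J
  define D where "D w = {x\<in>A. w \<in> N x}" for w
  have swap: "(\<Sum>J\<in>JJ. card (T J)) = (\<Sum>w\<in>V. card (D w) choose m)"
  proof -
    have "(\<Sum>J\<in>JJ. card (T J)) = (\<Sum>J\<in>JJ. \<Sum>w\<in>V. if (\<forall>x\<in>J. w \<in> N x) then 1 else 0)"
      unfolding T_def using fV by (simp add: card_filter_sum)
    also have "\<dots> = (\<Sum>w\<in>V. \<Sum>J\<in>JJ. if (\<forall>x\<in>J. w \<in> N x) then 1 else 0)"
      by (rule sum.swap)
    also have "\<dots> = (\<Sum>w\<in>V. card {J\<in>JJ. \<forall>x\<in>J. w \<in> N x})"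
      using finJJ by (simp add: card_filter_sum)
    also have "\<dots> = (\<Sum>w\<in>V. card (D w) choose m)"
    proof (rule sum.cong[OF refl])
      fix w assume "w \<in> V"
      have "{J\<in>JJ. \<forall>x\<in>J. w \<in> N x} = {J. J \<subseteq> D w \<and> card J = m}"
        unfolding JJ_def D_def by auto
      then show "card {J\<in>JJ. \<forall>x\<in>J. w \<in> N x} = card (D w) choose m"
        using n_subsets[of "D w" m] fA unfolding D_def by simp
    qed
    finally show ?thesis .
  qed
  have sumD: "(\<Sum>w\<in>V. card (D w)) = (\<Sum>x\<in>A. card (N x))"
  proof -
    have "(\<Sum>w\<in>V. card (D w)) = (\<Sum>w\<in>V. \<Sum>x\<in>A. if w \<in> N x then 1 else 0)"
      unfolding D_def using fA by (simp add: card_filter_sum)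
    also have "\<dots> = (\<Sum>x\<in>A. \<Sum>w\<in>V. if w \<in> N x then 1 else 0)"
      by (rule sum.swap)
    also have "\<dots> = (\<Sum>x\<in>A. card {w\<in>V. w \<in> N x})"
      using fV by (simp add: card_filter_sum)
    also have "\<dots> = (\<Sum>x\<in>A. card (N x))"
      proof (intro sum.cong refl)
      fix x assume "x \<in> A"
      then have "{w\<in>V. w \<in> N x} = N x" using NV by auto
      then show "card {w\<in>V. w \<in> N x} = card (N x)" by simp
    qed
    finally show ?thesis .
  qed
  have sumN: "e * n * a \<le> (\<Sum>x\<in>A. real (card (N x)))"
  proof -
    have "(\<Sum>x\<in>A. e * n) \<le> (\<Sum>x\<in>A. real (card (N x)))"
      using Nbig n_def by (intro sum_mono) auto
    then show ?thesis using a_def by (simp add: mult.commute)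
  qed
  define y where "y w = max (real (card (D w)) - (real m - 1)) 0" for w
  have ynn: "\<forall>w\<in>V. 0 \<le> y w" unfolding y_def by auto
  have sumy: "n * (e * a - (real m - 1)) \<le> (\<Sum>w\<in>V. y w)"
  proof -
    have "(\<Sum>w\<in>V. real (card (D w)) - (real m - 1)) \<le> (\<Sum>w\<in>V. y w)"
      unfolding y_def by (intro sum_mono) auto
    moreover have "(\<Sum>w\<in>V. real (card (D w)) - (real m - 1)) = (\<Sum>x\<in>A. real (card (N x))) - n * (real m - 1)"
    proof -
      have "(\<Sum>w\<in>V. real (card (D w))) = (\<Sum>x\<in>A. real (card (N x)))"
        using sumD by (metis of_nat_sum)
      then show ?thesis using n_def by (simp add: sum_subtractf)
    qed
    ultimately show ?thesis using sumN by (simp add: algebra_simps)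
  qed
  have base: "0 \<le> e * a - (real m - 1)" using me a_def by simp
  have pm: "n * ((\<Sum>w\<in>V. y w) / n) ^ m \<le> (\<Sum>w\<in>V. y w ^ m)"
    using power_mean[OF fV False ynn, of m] n_def by simp
  have "(e * a - (real m - 1)) ^ m \<le> ((\<Sum>w\<in>V. y w) / n) ^ m"
  proof (rule power_mono)
    show "e * a - (real m - 1) \<le> (\<Sum>w\<in>V. y w) / n"
      using sumy npos by (simp add: pos_le_divide_eq mult.commute)
  qed (rule base)
  then have low1: "n * (e * a - (real m - 1)) ^ m \<le> (\<Sum>w\<in>V. y w ^ m)"
  proof -
    assume h: "(e * a - (real m - 1)) ^ m \<le> ((\<Sum>w\<in>V. y w) / n) ^ m"
    have "real n * (e * a - (real m - 1)) ^ m \<le> real n * ((\<Sum>w\<in>V. y w) / n) ^ m"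
      using h by (intro mult_left_mono) auto
    then show ?thesis using pm by linarith
  qed
  have "(\<Sum>w\<in>V. y w ^ m) \<le> (\<Sum>w\<in>V. real (card (D w) choose m) * fact m)"
    unfolding y_def using choose_lower[OF m1] by (intro sum_mono) auto
  also have "\<dots> = real (\<Sum>J\<in>JJ. card (T J)) * fact m"
    using swap by (simp add: sum_distrib_right)
  finally have low: "n * (e * a - (real m - 1)) ^ m \<le> real (\<Sum>J\<in>JJ. card (T J)) * fact m"
    using low1 by linarith
  define X where "X = n * (e - (real m - 1) / a) ^ m"
  have Xeq: "X * real a ^ m = n * (e * a - (real m - 1)) ^ m"
  proof -
    have "(real m - 1) / a * a = real m - 1" using apos by simp
    then have "(e - (real m - 1) / a) * a = e * a - (real m - 1)" by (simp only: left_diff_distrib)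
    moreover have "X * real a ^ m = n * ((e - (real m - 1) / a) * a) ^ m"
      unfolding X_def by (simp add: power_mult_distrib)
    ultimately show ?thesis by simp
  qed
  show ?thesis
  proof (rule ccontr)
    assume "\<not> ?thesis"
    then have "\<forall>J\<in>JJ. \<not> (X \<le> real (card (T J)))"
      unfolding JJ_def T_def X_def n_def a_def by blast
    then have lt: "\<forall>J\<in>JJ. real (card (T J)) < X" by (simp add: not_le)
    have ne: "JJ \<noteq> {}" using obtain_subset_with_card_n[OF ma] unfolding JJ_def by blast
    have "real (\<Sum>J\<in>JJ. card (T J)) < (\<Sum>J\<in>JJ. X)"
      unfolding of_nat_sum using lt finJJ ne by (intro sum_strict_mono) auto
    also have "\<dots> = real (a choose m) * X" using cardJJ by simp
    finally have "real (\<Sum>J\<in>JJ. card (T J)) * fact m < (real (a choose m) * X) * fact m"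
      by (intro mult_strict_right_mono) auto
    also have "\<dots> = real (a choose m) * fact m * X" by (simp only: mult_ac)
    also have "\<dots> \<le> real a ^ m * X"
    proof -
      have "real (a choose m) * fact m \<le> real a ^ m"
        using binomial_fact_pow[of a m] by (metis of_nat_fact of_nat_le_iff of_nat_mult of_nat_power)
      moreover have "0 \<le> X"
      proof -
        have "(real m - 1) / a \<le> e" using base apos by (simp add: divide_le_eq mult.commute)
        then show ?thesis unfolding X_def by simp
      qed
      ultimately show ?thesis by (simp add: mult_right_mono)
    qed
    also have "\<dots> = X * real a ^ m" by (simp only: mult_ac)
    finally show False using low Xeq by linarith
  qed
qed

primrec lvl :: "nat \<Rightarrow> 'a set \<Rightarrow> real \<Rightarrow> (nat \<Rightarrow> 'a) set \<Rightarrow> nat \<Rightarrow> (nat \<Rightarrow> 'a) set" where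
  "lvl r V th M 0 = M"
| "lvl r V th M (Suc j) = {q \<in> {0..<r - Suc j} \<rightarrow>\<^sub>E V.
      th \<le> real (card {w\<in>V. q(r - Suc j := w) \<in> lvl r V th M j})}"

definition PP where "PP r V th M k = lvl r V th M (r - k)"

lemma PP_top: "PP r V th M r = M" by (simp add: PP_def)

lemma PP_mem:
  assumes "k < r"
  shows "q \<in> PP r V th M k \<longleftrightarrow> q \<in> {0..<k} \<rightarrow>\<^sub>E V \<and>
           th \<le> real (card {w\<in>V. q(k := w) \<in> PP r V th M (Suc k)})"
proof -
  have "r - k = Suc (r - Suc k)" using assms by simp
  moreover have "r - Suc (r - Suc k) = k" using assms by simp
  ultimately show ?thesis unfolding PP_def by simp
qed

lemma PP_sub:
  assumes "M \<subseteq> {0..<r} \<rightarrow>\<^sub>E V" "k \<le> r"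
  shows "PP r V th M k \<subseteq> {0..<k} \<rightarrow>\<^sub>E V"
proof (cases "k = r")
  case True then show ?thesis using assms PP_top by metis
next
  case False
  then have "k < r" using assms by simp
  then show ?thesis using PP_mem[of k r _ V th M] by blast
qed

lemma PP_restr:
  assumes th: "0 < th"
  shows "k \<le> r \<Longrightarrow> q \<in> PP r V th M k \<Longrightarrow> \<exists>h\<in>M. \<forall>i<k. h i = q i"
proof (induction "r - k" arbitrary: k q)
  case 0
  then have "k = r" by simp
  then show ?case using 0 PP_top by metis
next
  case (Suc j)
  then have kr: "k < r" by simp
  from Suc.prems PP_mem[OF kr] have "th \<le> real (card {w\<in>V. q(k := w) \<in> PP r V th M (Suc k)})"
    by blast
  then have "card {w\<in>V. q(k := w) \<in> PP r V th M (Suc k)} \<noteq> 0" using th by auto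
  then obtain w where w: "q(k := w) \<in> PP r V th M (Suc k)"
    by (metis (no_types, lifting) card.empty empty_Collect_eq)
  have "j = r - Suc k" using Suc.hyps by simp
  from Suc.hyps(1)[OF this _ w] kr obtain h where "h \<in> M" "\<forall>i<Suc k. h i = (q(k := w)) i"
    by auto
  then show ?case
  proof (intro bexI[of _ h])
    assume h: "\<forall>i<Suc k. h i = (q(k := w)) i"
    show "\<forall>i<k. h i = q i"
    proof (intro allI impI)
      fix i assume "i < k"
      then show "h i = q i" using h[rule_format, of i] by simp
    qed
  qed
qed

lemma PP_count:
  assumes fV: "finite V" and Msub: "M \<subseteq> {0..<r} \<rightarrow>\<^sub>E V" and kr: "k < r" and th: "0 \<le> th"
  shows "real (card (PP r V th M (Suc k))) \<le> real (card (PP r V th M k)) * card V + th * card V ^ k"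
proof -
  let ?P = "PP r V th M (Suc k)" and ?Q = "PP r V th M k" and ?I = "{0..<k} \<rightarrow>\<^sub>E V"
  define ext where "ext q = {w\<in>V. q(k:=w) \<in> ?P}" for q
  have Psub: "?P \<subseteq> {0..<Suc k} \<rightarrow>\<^sub>E V" using PP_sub Msub kr by (metis Suc_leI)
  have Qsub: "?Q \<subseteq> ?I" using PP_sub Msub kr by (metis less_imp_le)
  have finI: "finite ?I" using fV by (simp add: finite_PiE)
  have inj: "inj_on (\<lambda>h. (restrict h {0..<k}, h k)) ?P"
  proof
    fix h g assume hP: "h \<in> ?P" and gP: "g \<in> ?P"
      and eq: "(restrict h {0..<k}, h k) = (restrict g {0..<k}, g k)"
    show "h = g"
    proof
      fix x
      show "h x = g x"
      proof (cases "x < k")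
        case True
        from eq have "restrict h {0..<k} x = restrict g {0..<k} x" by simp
        with True show ?thesis by simp
      next
        case False
        show ?thesis
        proof (cases "x = k")
          case True then show ?thesis using eq by simp
        next
          case False
          then have "x \<notin> {0..<Suc k}" using \<open>\<not> x < k\<close> by auto
          moreover have "h \<in> {0..<Suc k} \<rightarrow>\<^sub>E V" "g \<in> {0..<Suc k} \<rightarrow>\<^sub>E V"
            using hP gP Psub by auto
          ultimately show ?thesis using PiE_arb by metis
        qed
      qed
    qed
  qed
  have img: "(\<lambda>h. (restrict h {0..<k}, h k)) ` ?P \<subseteq> Sigma ?I ext"
  proof
    fix z assume "z \<in> (\<lambda>h. (restrict h {0..<k}, h k)) ` ?P"
    then obtain h where hP: "h \<in> ?P" and z: "z = (restrict h {0..<k}, h k)" by auto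
    have hE: "h \<in> {0..<Suc k} \<rightarrow>\<^sub>E V" using hP Psub by auto
    have "restrict h {0..<k} \<in> ?I" using hE by auto
    moreover have "(restrict h {0..<k})(k := h k) = h"
    proof
      fix x show "((restrict h {0..<k})(k := h k)) x = h x"
      proof (cases "x < k")
        case True then show ?thesis by simp
      next
        case False
        show ?thesis
        proof (cases "x = k")
          case True then show ?thesis by simp
        next
          case False
          then have "x \<notin> {0..<Suc k}" using \<open>\<not> x < k\<close> by auto
          then show ?thesis using PiE_arb[OF hE] False \<open>\<not> x < k\<close> by simp
        qed
      qed
    qed
    then have "h k \<in> ext (restrict h {0..<k})" unfolding ext_def using hE hP by auto
    ultimately show "z \<in> Sigma ?I ext" using z by auto
  qed
  have finext: "\<forall>q. finite (ext q)" unfolding ext_def using fV by auto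
  have "card ?P \<le> card (Sigma ?I ext)"
    using card_inj_on_le[OF inj img] finI finext by auto
  also have "\<dots> = (\<Sum>q\<in>?I. card (ext q))" using finI finext by simp
  finally have c1: "real (card ?P) \<le> (\<Sum>q\<in>?I. real (card (ext q)))"
    by (metis of_nat_le_iff of_nat_sum)
  have "(\<Sum>q\<in>?I. real (card (ext q))) \<le> (\<Sum>q\<in>?I. if q \<in> ?Q then real (card V) else th)"
  proof (rule sum_mono)
    fix q assume qI: "q \<in> ?I"
    show "real (card (ext q)) \<le> (if q \<in> ?Q then real (card V) else th)"
    proof (cases "q \<in> ?Q")
      case True
      have "ext q \<subseteq> V" unfolding ext_def by auto
      then show ?thesis using True fV by (simp add: card_mono)
    next
      case False
      then show ?thesis using PP_mem[OF kr, of q] qI unfolding ext_def by auto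
    qed
  qed
  also have "\<dots> = real (card ?Q) * card V + real (card (?I - ?Q)) * th"
  proof -
    have "(\<Sum>q\<in>?I. if q \<in> ?Q then real (card V) else th)
        = real (card (?I \<inter> ?Q)) * card V + real (card (?I - ?Q)) * th"
      using finI by (simp add: sum.If_cases Diff_eq)
    moreover have "?I \<inter> ?Q = ?Q" using Qsub by auto
    ultimately show ?thesis by simp
  qed
  also have "\<dots> \<le> real (card ?Q) * card V + th * card V ^ k"
  proof -
    have "card (?I - ?Q) \<le> card ?I" using finI by (simp add: card_mono)
    also have "card ?I = card V ^ k" by (simp add: card_PiE)
    finally show ?thesis using th by (simp add: mult.commute mult_left_mono)
  qed
  finally show ?thesis using c1 by linarith
qed

lemma PP_dens:
  fixes c \<epsilon> th :: real
  assumes fV: "finite V" and npos: "card V > 0" and Msub: "M \<subseteq> {0..<r} \<rightarrow>\<^sub>E V"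
    and th: "th = \<epsilon> * card V" and eps: "0 \<le> \<epsilon>" and cM: "c * card V ^ r \<le> card M"
  shows "k \<le> r \<Longrightarrow> (c - real (r - k) * \<epsilon>) * card V ^ k \<le> card (PP r V th M k)"
proof (induction "r - k" arbitrary: k)
  case 0
  then have "k = r" by simp
  then show ?case using cM PP_top by (metis cancel_comm_monoid_add_class.diff_cancel diff_zero mult_zero_left of_nat_0)
next
  case (Suc j)
  then have kr: "k < r" by simp
  have IH: "(c - real (r - Suc k) * \<epsilon>) * card V ^ Suc k \<le> card (PP r V th M (Suc k))"
    by (rule Suc.hyps(1)) (use Suc.hyps(2) kr in auto)
  have cnt: "real (card (PP r V th M (Suc k))) \<le> real (card (PP r V th M k)) * card V + th * card V ^ k"
    using PP_count[OF fV Msub kr] th eps by simp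
  have rk: "real (r - k) = real (r - Suc k) + 1" using kr by simp
  let ?n = "real (card V)"
  have "(c - real (r - k) * \<epsilon>) * ?n ^ k * ?n = (c - real (r - Suc k) * \<epsilon>) * ?n ^ Suc k - \<epsilon> * ?n * ?n ^ k"
    unfolding rk by (simp add: algebra_simps)
  also have "\<dots> \<le> real (card (PP r V th M k)) * ?n"
    using IH cnt th by simp
  finally show ?case using npos by simp
qed

definition gp :: "nat \<Rightarrow> (nat\<Rightarrow>nat\<Rightarrow>bool) \<Rightarrow> ('a\<Rightarrow>'a\<Rightarrow>bool) \<Rightarrow> (nat\<Rightarrow>'a) set \<Rightarrow> nat \<Rightarrow> 'a \<Rightarrow> nat \<Rightarrow> 'a \<Rightarrow> bool" where
  "gp r EH E M i x j y \<longleftrightarrow> (E x y \<longleftrightarrow> EH i j) \<and>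
     (E x y \<longrightarrow> (\<exists>h\<in>M. \<exists>u<r. \<exists>v<r. EH u v \<and> {h u, h v} = {x, y}))"

definition coh where
  "coh r EH E M k F \<longleftrightarrow> (\<forall>f\<in>F. \<forall>g\<in>F. f \<noteq> g \<longrightarrow> f ` {0..<k} \<inter> g ` {0..<k} = {} \<and>
      (\<forall>i<k. \<forall>j<k. i \<noteq> j \<longrightarrow> gp r EH E M i (f i) j (g j)))"

lemma gp_copy:
  assumes "M \<subseteq> induced_copies r EH V E" "h \<in> M" "i<r" "j<r" "i\<noteq>j"
  shows "gp r EH E M i (h i) j (h j)"
proof -
  have "h \<in> induced_copies r EH V E" using assms by auto
  then have "EH i j \<longleftrightarrow> E (h i) (h j)" using assms unfolding induced_copies_def by auto
  then show ?thesis unfolding gp_def using assms by blast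
qed

lemma ic_PiE: "M \<subseteq> induced_copies r EH V E \<Longrightarrow> M \<subseteq> {0..<r} \<rightarrow>\<^sub>E V"
  unfolding induced_copies_def by auto

lemma PP_gp:
  assumes M: "M \<subseteq> induced_copies r EH V E" and th: "0 < th" and kr: "k \<le> r"
    and q: "q \<in> PP r V th M k" and ij: "i<k" "j<k" "i\<noteq>j"
  shows "gp r EH E M i (q i) j (q j)"
proof -
  obtain h where h: "h \<in> M" "\<forall>i<k. h i = q i" using PP_restr[OF th kr q] by blast
  have "gp r EH E M i (h i) j (h j)" using gp_copy[OF M h(1)] ij kr by auto
  then show ?thesis using h ij by simp
qed

lemma PP_inj:
  assumes M: "M \<subseteq> induced_copies r EH V E" and th: "0 < th" and kr: "k \<le> r"
    and q: "q \<in> PP r V th M k"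
  shows "inj_on q {0..<k}"
proof
  fix x y assume x: "x \<in> {0..<k}" and y: "y \<in> {0..<k}" and eq: "q x = q y"
  obtain h where h: "h \<in> M" "\<forall>i<k. h i = q i" using PP_restr[OF th kr q] by blast
  have "inj_on h {0..<r}" using h M unfolding induced_copies_def by auto
  moreover have "h x = h y" using h x y eq by auto
  ultimately show "x = y" using x y kr by (auto simp: inj_on_def)
qed

lemma select:
  fixes B :: nat
  assumes M: "M \<subseteq> induced_copies r EH V E" and fV: "finite V" and kr: "k < r"
    and FP: "F \<subseteq> PP r V th M k" and th: "th = (2 / B) * card V" and B: "B \<ge> 1"
    and m1: "1 \<le> m" and mB: "m * B \<le> card F"
  shows "\<exists>J. J \<subseteq> F \<and> card J = m \<and>
     real (card V) / B ^ m \<le> card {w\<in>V. \<forall>f\<in>J. f(k:=w) \<in> PP r V th M (Suc k)}"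
proof -
  have Msub: "M \<subseteq> {0..<r} \<rightarrow>\<^sub>E V" using ic_PiE[OF M] .
  have "F \<subseteq> {0..<k} \<rightarrow>\<^sub>E V" using FP PP_sub[OF Msub] kr by (meson less_imp_le order_trans)
  then have fF: "finite F" using fV by (meson finite_PiE finite_atLeastLessThan finite_subset)
  define N where "N f = {w\<in>V. f(k:=w) \<in> PP r V th M (Suc k)}" for f
  define e where "e = 2 / real B"
  have Bpos: "real B > 0" using B by simp
  have NV: "\<forall>x\<in>F. N x \<subseteq> V" unfolding N_def by auto
  have Nbig: "\<forall>x\<in>F. e * card V \<le> card (N x)"
  proof
    fix x assume "x \<in> F"
    then have "x \<in> PP r V th M k" using FP by auto
    then have "th \<le> real (card (N x))" using PP_mem[OF kr, of x V th M] unfolding N_def by blast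
    then show "e * card V \<le> card (N x)" using th unfolding e_def by simp
  qed
  have ma: "m \<le> card F" using mB B by (metis le_trans mult_le_cancel1 mult.right_neutral)
  have a_pos: "card F > 0" using ma m1 by simp
  have "real m * B \<le> card F" using mB by (metis of_nat_le_iff of_nat_mult)
  then have me: "real m - 1 \<le> e * card F"
  proof -
    assume h: "real m * B \<le> card F"
    have "e * card F \<ge> e * (real m * B)" using h e_def Bpos by (intro mult_left_mono) auto
    also have "e * (real m * B) = 2 * real m" unfolding e_def using Bpos by simp
    finally show ?thesis by simp
  qed
  obtain J where J: "J \<subseteq> F" "card J = m"
      "real (card V) * (e - (real m - 1) / card F) ^ m \<le> card {w\<in>V. \<forall>x\<in>J. w \<in> N x}"
    using kst[OF fF fV NV Nbig m1 ma me] by blast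
  have "(real m - 1) / card F \<le> 1 / B"
  proof -
    have "(real m - 1) / card F \<le> real m / card F" using a_pos by (simp add: divide_right_mono)
    also have "\<dots> \<le> real m / (real m * B)"
      using \<open>real m * B \<le> card F\<close> m1 Bpos a_pos by (intro divide_left_mono) auto
    also have "\<dots> = 1 / B" using m1 by simp
    finally show ?thesis .
  qed
  then have "1 / B \<le> e - (real m - 1) / card F" unfolding e_def by simp
  then have "(1 / real B) ^ m \<le> (e - (real m - 1) / card F) ^ m"
    by (intro power_mono) auto
  then have "real (card V) / B ^ m \<le> real (card V) * (e - (real m - 1) / card F) ^ m"
  proof -
    assume h: "(1 / real B) ^ m \<le> (e - (real m - 1) / card F) ^ m"
    have "real (card V) / B ^ m = real (card V) * (1 / real B) ^ m" by (simp add: power_one_over)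
    also have "\<dots> \<le> real (card V) * (e - (real m - 1) / card F) ^ m"
      using h by (intro mult_left_mono) auto
    finally show ?thesis .
  qed
  also have "\<dots> \<le> card {w\<in>V. \<forall>f\<in>J. f(k:=w) \<in> PP r V th M (Suc k)}"
  proof -
    have "{w\<in>V. \<forall>x\<in>J. w \<in> N x} = {w\<in>V. \<forall>f\<in>J. f(k:=w) \<in> PP r V th M (Suc k)}"
      unfolding N_def using J(1) by auto
    then show ?thesis using J(3) by simp
  qed
  finally show ?thesis using J by blast
qed

lemma extend:
  assumes M: "M \<subseteq> induced_copies r EH V E" and th: "0 < th" and kr: "k < r"
    and JP: "J \<subseteq> PP r V th M k" and cohJ: "coh r EH E M k J" and fJ: "finite J" and fV: "finite V"
    and big: "card J \<le> card {w\<in>V. \<forall>f\<in>J. f(k:=w) \<in> PP r V th M (Suc k)}"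
  shows "\<exists>F'. F' \<subseteq> PP r V th M (Suc k) \<and> coh r EH E M (Suc k) F' \<and> card F' = card J \<and> finite F'"
proof -
  define T where "T = {w\<in>V. \<forall>f\<in>J. f(k:=w) \<in> PP r V th M (Suc k)}"
  have fT: "finite T" using fV T_def by auto
  obtain w where w: "w ` J \<subseteq> T" "inj_on w J" using card_le_inj[OF fJ fT] big T_def by auto
  have Msub: "M \<subseteq> {0..<r} \<rightarrow>\<^sub>E V" using ic_PiE[OF M] .
  have JE: "J \<subseteq> {0..<k} \<rightarrow>\<^sub>E V" using JP PP_sub[OF Msub] kr by (meson less_imp_le order_trans)
  have kr': "Suc k \<le> r" using kr by simp
  have upd: "f(k := v) \<in> PP r V th M (Suc k)" if "f \<in> J" "v \<in> T" for f v
    using that T_def by auto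
  have fact1: "gp r EH E M i (f i) k v" if "f \<in> J" "v \<in> T" "i < k" for f v i
  proof -
    have "gp r EH E M i ((f(k:=v)) i) k ((f(k:=v)) k)"
      by (rule PP_gp[OF M th kr' upd[OF that(1,2)]]) (use that(3) in auto)
    then show ?thesis using that(3) by simp
  qed
  have fact2: "gp r EH E M k v j (f j)" if "f \<in> J" "v \<in> T" "j < k" for f v j
  proof -
    have "gp r EH E M k ((f(k:=v)) k) j ((f(k:=v)) j)"
      by (rule PP_gp[OF M th kr' upd[OF that(1,2)]]) (use that(3) in auto)
    then show ?thesis using that(3) by simp
  qed
  have fact3: "v \<notin> f ` {0..<k}" if "f \<in> J" "v \<in> T" for f v
  proof
    assume "v \<in> f ` {0..<k}"
    then obtain i where i: "i < k" "f i = v" by auto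
    have "inj_on (f(k:=v)) {0..<Suc k}" using PP_inj[OF M th kr' upd[OF that]] .
    moreover have "(f(k:=v)) i = (f(k:=v)) k" using i by simp
    ultimately have "i = k" using i by (auto simp: inj_on_def)
    then show False using i by simp
  qed
  define F' where "F' = (\<lambda>f. f(k := w f)) ` J"
  have injF: "inj_on (\<lambda>f. f(k := w f)) J"
  proof
    fix f g assume fJ': "f \<in> J" and gJ': "g \<in> J" and eq: "f(k := w f) = g(k := w g)"
    show "f = g"
    proof
      fix x show "f x = g x"
      proof (cases "x = k")
        case True
        have "f \<in> {0..<k} \<rightarrow>\<^sub>E V" "g \<in> {0..<k} \<rightarrow>\<^sub>E V" using fJ' gJ' JE by auto
        moreover have "k \<notin> {0..<k}" by simp
        ultimately show ?thesis using True PiE_arb by metis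
      next
        case False
        then show ?thesis using fun_cong[OF eq, of x] by simp
      qed
    qed
  qed
  have img: "(f(k := v)) ` {0..<Suc k} = insert v (f ` {0..<k})" for f :: "nat \<Rightarrow> 'a" and v
  proof -
    have "{0..<Suc k} = insert k {0..<k}" by auto
    moreover have "(f(k := v)) ` {0..<k} = f ` {0..<k}" by (intro image_cong) auto
    moreover have "{0..<k} \<inter> {x. x \<noteq> k} = {0..<k}" by auto
    ultimately show ?thesis by simp
  qed
  have "coh r EH E M (Suc k) F'"
    unfolding coh_def
  proof (intro ballI impI conjI allI)
    fix f' g' assume f'F: "f' \<in> F'" and g'F: "g' \<in> F'" and ne: "f' \<noteq> g'"
    obtain f where f: "f \<in> J" "f' = f(k := w f)" using f'F F'_def by auto
    obtain g where g: "g \<in> J" "g' = g(k := w g)" using g'F F'_def by auto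
    have fg: "f \<noteq> g" using ne f g by auto
    have wf: "w f \<in> T" and wg: "w g \<in> T" using w f g by auto
    have wfg: "w f \<noteq> w g" using w(2) f g fg by (auto simp: inj_on_def)
    have disj: "f ` {0..<k} \<inter> g ` {0..<k} = {}" using cohJ f g fg unfolding coh_def by blast
    show "f' ` {0..<Suc k} \<inter> g' ` {0..<Suc k} = {}"
      unfolding f(2) g(2) img using disj wfg fact3[OF f(1) wg] fact3[OF g(1) wf] by auto
    fix i j assume i: "i < Suc k" and j: "j < Suc k" and ij: "i \<noteq> j"
    show "gp r EH E M i (f' i) j (g' j)"
    proof (cases "i < k")
      case True
      show ?thesis
      proof (cases "j < k")
        case True
        then show ?thesis using \<open>i < k\<close> cohJ f g fg ij unfolding coh_def by simp
      next
        case False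
        then have "j = k" using j by simp
        then show ?thesis using fact1[OF f(1) wg \<open>i < k\<close>] f g \<open>i < k\<close> by simp
      qed
    next
      case False
      then have ik: "i = k" using i by simp
      then have "j < k" using j ij by simp
      then show ?thesis using fact2[OF g(1) wf \<open>j < k\<close>] f g ik by simp
    qed
  qed
  moreover have "F' \<subseteq> PP r V th M (Suc k)" using upd w F'_def by auto
  moreover have "card F' = card J" using card_image[OF injF] F'_def by simp
  moreover have "finite F'" using fJ F'_def by simp
  ultimately show ?thesis by blast
qed

lemma coh_disj: "coh r EH E M k F \<Longrightarrow> f \<in> F \<Longrightarrow> g \<in> F \<Longrightarrow> f \<noteq> g \<Longrightarrow> f ` {0..<k} \<inter> g ` {0..<k} = {}"
  unfolding coh_def by blast

lemma coh_gp: "coh r EH E M k F \<Longrightarrow> f \<in> F \<Longrightarrow> g \<in> F \<Longrightarrow> f \<noteq> g \<Longrightarrow> i < k \<Longrightarrow> j < k \<Longrightarrow> i \<noteq> j \<Longrightarrow> gp r EH E M i (f i) j (g j)"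
  unfolding coh_def by blast

lemma coh_mono: "coh r EH E M k F \<Longrightarrow> J \<subseteq> F \<Longrightarrow> coh r EH E M k J"
  unfolding coh_def by blast

lemma coh_one:
  assumes "F \<subseteq> {0..<1} \<rightarrow>\<^sub>E V"
  shows "coh r EH E M 1 F"
  unfolding coh_def
proof (intro ballI impI conjI allI)
  fix f g assume f: "f \<in> F" and g: "g \<in> F" and ne: "f \<noteq> g"
  have fE: "f \<in> {0..<1} \<rightarrow>\<^sub>E V" and gE: "g \<in> {0..<1} \<rightarrow>\<^sub>E V" using f g assms by auto
  have "f 0 \<noteq> g 0"
  proof
    assume eq: "f 0 = g 0"
    have "f = g"
    proof
      fix x show "f x = g x"
      proof (cases "x = 0")
        case True then show ?thesis using eq by simp
      next
        case False
        then have "x \<notin> {0..<1}" by simp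
        then show ?thesis using PiE_arb fE gE by metis
      qed
    qed
    then show False using ne by simp
  qed
  then show "f ` {0..<1} \<inter> g ` {0..<1} = {}" by auto
  fix i j :: nat assume "i < 1" "j < 1" "i \<noteq> j"
  then show "gp r EH E M i (f i) j (g j)" by simp
qed

lemma family:
  fixes B s :: nat
  assumes M: "M \<subseteq> induced_copies r EH V E" and fV: "finite V" and th: "th = (2 / B) * card V"
    and B: "B \<ge> 1" and thpos: "0 < th" and s1: "1 \<le> s"
    and base: "s * B ^ (r - 1) \<le> card (PP r V th M 1)"
    and grow: "\<And>k. 2 \<le> k \<Longrightarrow> k < r \<Longrightarrow> real (s * B ^ (r - k)) \<le> real (card V) / B ^ (s * B ^ (r - k))"
  shows "1 \<le> k \<Longrightarrow> k < r \<Longrightarrow> \<exists>F. F \<subseteq> PP r V th M k \<and> coh r EH E M k F \<and> s * B ^ (r - k) \<le> card F \<and> finite F"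
proof (induction k)
  case 0 then show ?case by simp
next
  case (Suc k)
  have Msub: "M \<subseteq> {0..<r} \<rightarrow>\<^sub>E V" using ic_PiE[OF M] .
  show ?case
  proof (cases "k = 0")
    case True
    have sub: "PP r V th M 1 \<subseteq> {0..<1} \<rightarrow>\<^sub>E V" using PP_sub[OF Msub, of 1 th] Suc.prems True by simp
    then have "finite (PP r V th M 1)" using fV by (meson finite_PiE finite_atLeastLessThan finite_subset)
    moreover have "coh r EH E M 1 (PP r V th M 1)" using coh_one[OF sub] .
    ultimately show ?thesis using True base by auto
  next
    case False
    then have k1: "1 \<le> k" and kr: "k < r" using Suc.prems by auto
    obtain F where F: "F \<subseteq> PP r V th M k" "coh r EH E M k F" "s * B ^ (r - k) \<le> card F" "finite F"
      using Suc.IH[OF k1 kr] by blast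
    define m where "m = s * B ^ (r - Suc k)"
    have rk: "r - k = Suc (r - Suc k)" using Suc.prems by simp
    have mB: "m * B \<le> card F" using F(3) unfolding m_def rk by (simp add: mult_ac)
    have m1: "1 \<le> m" unfolding m_def using s1 B by (simp add: Suc_le_eq)
    obtain J where J: "J \<subseteq> F" "card J = m"
        "real (card V) / B ^ m \<le> card {w\<in>V. \<forall>f\<in>J. f(k:=w) \<in> PP r V th M (Suc k)}"
      using select[OF M fV kr _ th B m1 mB] F(1) by blast
    have "real m \<le> real (card V) / B ^ m" using grow[of "Suc k"] Suc.prems k1 unfolding m_def by simp
    then have big: "card J \<le> card {w\<in>V. \<forall>f\<in>J. f(k:=w) \<in> PP r V th M (Suc k)}"
      using J by linarith
    have fJ: "finite J" using J(1) F(4) finite_subset by blast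
    obtain F' where "F' \<subseteq> PP r V th M (Suc k)" "coh r EH E M (Suc k) F'" "card F' = card J" "finite F'"
      using extend[OF M thpos kr _ coh_mono[OF F(2) J(1)] fJ fV big] J(1) F(1) by blast
    then show ?thesis using J(2) m_def by auto
  qed
qed

lemma M_inj: "M \<subseteq> induced_copies r EH V E \<Longrightarrow> h \<in> M \<Longrightarrow> inj_on h {0..<r}"
  unfolding induced_copies_def by auto

lemma upd_notin:
  assumes M: "M \<subseteq> induced_copies r EH V E" and h: "f(k:=v) \<in> M" and kr: "k < r"
  shows "v \<notin> f ` {0..<k}"
proof
  assume "v \<in> f ` {0..<k}"
  then obtain i where i: "i < k" "f i = v" by auto
  have "inj_on (f(k:=v)) {0..<r}" using M_inj[OF M h] .
  moreover have "(f(k:=v)) i = (f(k:=v)) k" using i by simp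
  ultimately have "i = k" using i kr by (auto simp: inj_on_def)
  then show False using i by simp
qed

lemma img_upd: "(f(k := v)) ` {0..<Suc k} = insert v (f ` {0..<k})"
proof -
  have "{0..<Suc k} = insert k {0..<k}" by auto
  moreover have "(f(k := v)) ` {0..<k} = f ` {0..<k}" by (intro image_cong) auto
  moreover have "{0..<k} \<inter> {x. x \<noteq> k} = {0..<k}" by auto
  ultimately show ?thesis by simp
qed

lemma final:
  fixes B s :: nat and p :: real
  assumes M: "M \<subseteq> induced_copies r EH V E" and fV: "finite V" and r2: "r \<ge> 2"
    and th: "th = (2 / B) * card V" and B: "B \<ge> 1" and thpos: "0 < th" and s1: "1 \<le> s"
    and base: "s * B ^ (r - 1) \<le> card (PP r V th M 1)"
    and grow: "\<And>k. 2 \<le> k \<Longrightarrow> k < r \<Longrightarrow> real (s * B ^ (r - k)) \<le> real (card V) / B ^ (s * B ^ (r - k))"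
    and fin1: "real (card V) powr p < real (card V) / B ^ s"
    and fin2: "real s \<le> real (card V) / B ^ s"
  shows "\<exists>(t::nat) X. real t > real (card V) powr p \<and>
           induced_of_type r EH V E (\<lambda>i. if i = r - 1 then t else s) X \<and>
           covers r EH E M (\<lambda>i. if i = r - 1 then t else s) X"
proof -
  define k where "k = r - 1"
  have kr: "k < r" and k1: "1 \<le> k" and rk: "r = Suc k" using r2 k_def by auto
  have Msub: "M \<subseteq> {0..<r} \<rightarrow>\<^sub>E V" using ic_PiE[OF M] .
  obtain F where F: "F \<subseteq> PP r V th M k" "coh r EH E M k F" "s * B ^ (r - k) \<le> card F" "finite F"
    using family[OF M fV th B thpos s1 base grow k1 kr] by blast
  have sB: "s * B \<le> card F" using F(3) rk by simp
  obtain J where J: "J \<subseteq> F" "card J = s"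
      "real (card V) / B ^ s \<le> card {w\<in>V. \<forall>f\<in>J. f(k:=w) \<in> PP r V th M (Suc k)}"
    using select[OF M fV kr F(1) th B s1 sB] by blast
  define T where "T = {w\<in>V. \<forall>f\<in>J. f(k:=w) \<in> M}"
  have PPr: "PP r V th M (Suc k) = M" using rk PP_top by metis
  have Tc: "real (card V) / B ^ s \<le> card T" using J(3) unfolding T_def PPr .
  define t where "t = card T"
  have fT: "finite T" unfolding T_def using fV by auto
  have TV: "T \<subseteq> V" unfolding T_def by auto
  have tbig: "real t > real (card V) powr p" using Tc fin1 t_def by linarith
  have ts: "s \<le> t" using Tc fin2 t_def by linarith
  have fJ: "finite J" using J(1) F(4) finite_subset by blast
  have cohJ: "coh r EH E M k J" using coh_mono[OF F(2) J(1)] .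
  have JP: "J \<subseteq> PP r V th M k" using J(1) F(1) by auto
  have JE: "J \<subseteq> {0..<k} \<rightarrow>\<^sub>E V" using JP PP_sub[OF Msub] kr by (meson less_imp_le order_trans)
  have kle: "k \<le> r" using kr by simp
  have updM: "f(k:=w) \<in> M" if "f \<in> J" "w \<in> T" for f w using that T_def by auto
  define sz where "sz = (\<lambda>i. if i = r - 1 then t else s)"
  define X where "X = (\<lambda>i. if i = k then T else (\<lambda>f. f i) ` J)"
  have Xk: "X k = T" unfolding X_def by simp
  have Xi: "i \<noteq> k \<Longrightarrow> X i = (\<lambda>f. f i) ` J" for i unfolding X_def by simp
  have gpall: "gp r EH E M i x j y" if ij: "i < r" "j < r" "i \<noteq> j" and x: "x \<in> X i" and y: "y \<in> X j" for i j x y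
  proof (cases "i = k")
    case True
    then have jk: "j < k" using ij rk by auto
    obtain g where g: "g \<in> J" "y = g j" using y Xi[of j] jk by auto
    have xT: "x \<in> T" using x True Xk by simp
    have "gp r EH E M k ((g(k:=x)) k) j ((g(k:=x)) j)"
      by (rule gp_copy[OF M updM[OF g(1) xT]]) (use kr jk in auto)
    then show ?thesis using True g jk by simp
  next
    case False
    then have ik: "i < k" using ij rk by auto
    obtain f where f: "f \<in> J" "x = f i" using x Xi[of i] False by auto
    show ?thesis
    proof (cases "j = k")
      case True
      have yT: "y \<in> T" using y True Xk by simp
      have "gp r EH E M i ((f(k:=y)) i) k ((f(k:=y)) k)"
        by (rule gp_copy[OF M updM[OF f(1) yT]]) (use kr ik in auto)
      then show ?thesis using True f ik by simp
    next
      case False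
      then have jk: "j < k" using ij rk by auto
      obtain g where g: "g \<in> J" "y = g j" using y Xi[of j] False by auto
      show ?thesis
      proof (cases "f = g")
        case True
        then show ?thesis using PP_gp[OF M thpos kle, of f i j] JP f g ik jk ij by auto
      next
        case False
        then show ?thesis using coh_gp[OF cohJ f(1) g(1) False ik jk ij(3)] f g by simp
      qed
    qed
  qed
  have injJ: "inj_on (\<lambda>f. f i) J" if ik: "i < k" for i
  proof
    fix f g assume f: "f \<in> J" and g: "g \<in> J" and eq: "f i = g i"
    show "f = g"
    proof (rule ccontr)
      assume "f \<noteq> g"
      then have d: "f ` {0..<k} \<inter> g ` {0..<k} = {}" using coh_disj[OF cohJ f g] by blast
      have a1: "f i \<in> f ` {0..<k}" using ik by simp
      have a2: "f i \<in> g ` {0..<k}" unfolding eq using ik by simp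
      have "f i \<in> f ` {0..<k} \<inter> g ` {0..<k}" using a1 a2 by (rule IntI)
      then show False using d by simp
    qed
  qed
  have cls: "X i \<subseteq> V \<and> finite (X i) \<and> card (X i) = sz i" if "i < r" for i
  proof (cases "i = k")
    case True
    then show ?thesis using Xk TV fT t_def sz_def k_def by auto
  next
    case False
    then have ik: "i < k" using that rk by auto
    have "X i \<subseteq> V"
    proof
      fix x assume "x \<in> X i"
      then obtain f where f: "f \<in> J" "x = f i" using Xi[OF False] by auto
      then have "f \<in> {0..<k} \<rightarrow>\<^sub>E V" using JE by auto
      then show "x \<in> V" using f ik by auto
    qed
    moreover have "finite (X i)" using Xi[OF False] fJ by simp
    moreover have "card (X i) = s" using Xi[OF False] card_image[OF injJ[OF ik]] J(2) by simp
    ultimately show ?thesis using sz_def k_def False by auto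
  qed
  have disj: "X i \<inter> X j = {}" if ij: "i < r" "j < r" "i \<noteq> j" for i j
  proof -
    have "x \<noteq> y" if x: "x \<in> X i" and y: "y \<in> X j" for x y
    proof -
      have key: "a \<noteq> b" if a: "a \<in> X i'" and b: "b \<in> X k" and ik: "i' < k" for a b i'
      proof -
        obtain f where f: "f \<in> J" "a = f i'" using a Xi[of i'] ik by auto
        have "b \<in> T" using b Xk by simp
        then have "b \<notin> f ` {0..<k}" using upd_notin[OF M updM[OF f(1)] kr] by blast
        then show ?thesis using f ik by auto
      qed
      show ?thesis
      proof (cases "i = k")
        case True
        then have "j < k" using ij rk by auto
        then show ?thesis using key[OF y, of x] x True by auto
      next
        case False
        then have ik: "i < k" using ij rk by auto
        show ?thesis
        proof (cases "j = k")
          case True then show ?thesis using key[OF x _ ik] y by auto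
        next
          case False
          then have jk: "j < k" using ij rk by auto
          obtain f where f: "f \<in> J" "x = f i" using x Xi[of i] ik by auto
          obtain g where g: "g \<in> J" "y = g j" using y Xi[of j] jk by auto
          show ?thesis
          proof (cases "f = g")
            case True
            have "inj_on f {0..<k}" using PP_inj[OF M thpos kle] JP f by auto
            then show ?thesis using f g True ik jk ij by (auto simp: inj_on_def)
          next
            case False
            then have d: "f ` {0..<k} \<inter> g ` {0..<k} = {}" using coh_disj[OF cohJ f(1) g(1)] by blast
            show ?thesis
            proof
              assume xy: "x = y"
              have a1: "x \<in> f ` {0..<k}" using f ik by simp
              have a2: "x \<in> g ` {0..<k}" using g jk xy by simp
              have "x \<in> f ` {0..<k} \<inter> g ` {0..<k}" using a1 a2 by (rule IntI)
              then show False using d by simp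
            qed
          qed
        qed
      qed
    qed
    then show ?thesis by blast
  qed
  have iot: "induced_of_type r EH V E sz X"
    unfolding induced_of_type_def
  proof (intro conjI allI impI ballI)
    fix i assume "i < r"
    then show "X i \<subseteq> V" "finite (X i)" "card (X i) = sz i" using cls by auto
  next
    fix i j assume "i < r" "j < r" "i \<noteq> j"
    then show "X i \<inter> X j = {}" using disj by auto
  next
    fix i j x y assume "i < r" "j < r" "i \<noteq> j" "x \<in> X i" "y \<in> X j"
    then show "E x y \<longleftrightarrow> EH i j" using gpall unfolding gp_def by blast
  qed
  have MinS: "Min (sz ` {0..<r}) = s"
  proof (rule Min_eqI)
    show "finite (sz ` {0..<r})" by simp
    show "\<And>y. y \<in> sz ` {0..<r} \<Longrightarrow> s \<le> y" using ts sz_def by auto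
    show "s \<in> sz ` {0..<r}"
    proof
      show "s = sz 0" using sz_def r2 by simp
      show "0 \<in> {0..<r}" using r2 by simp
    qed
  qed
  obtain e where e: "bij_betw e {0..<s} J" using ex_bij_betw_nat_finite[OF fJ] J(2) by blast
  obtain w where w: "w ` {0..<s} \<subseteq> T" "inj_on w {0..<s}"
  proof -
    have "card {0..<s} \<le> card T" using ts t_def by simp
    then show ?thesis using card_le_inj[OF _ fT, of "{0..<s}"] that by blast
  qed
  define ff where "ff = (\<lambda>l. (e l)(k := w l))"
  have eJ: "l < s \<Longrightarrow> e l \<in> J" for l using e by (auto simp: bij_betw_def)
  have wT: "l < s \<Longrightarrow> w l \<in> T" for l using w by auto
  have ffM: "ff l \<in> M" if "l < s" for l using updM[OF eJ[OF that] wT[OF that]] unfolding ff_def .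
  have ffimg: "ff l ` {0..<r} = insert (w l) (e l ` {0..<k})" for l
    unfolding ff_def rk by (rule img_upd)
  have cov: "covers r EH E M sz X"
    unfolding covers_def MinS
  proof (intro conjI)
    show "\<forall>a<r. \<forall>b<r. a \<noteq> b \<longrightarrow> (\<forall>x\<in>X a. \<forall>y\<in>X b. E x y \<longrightarrow>
        (\<exists>h\<in>M. \<exists>u<r. \<exists>v<r. EH u v \<and> {h u, h v} = {x, y}))"
    proof (intro allI impI ballI)
      fix a b x y assume "a < r" "b < r" "a \<noteq> b" "x \<in> X a" "y \<in> X b" "E x y"
      moreover have "gp r EH E M a x b y" using gpall calculation by blast
      ultimately show "\<exists>h\<in>M. \<exists>u<r. \<exists>v<r. EH u v \<and> {h u, h v} = {x, y}"
        unfolding gp_def by blast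
    qed
    show "\<exists>f :: nat \<Rightarrow> nat \<Rightarrow> 'a. (\<forall>l < s. f l \<in> M) \<and>
        (\<forall>l < s. \<forall>l' < s. l \<noteq> l' \<longrightarrow> f l ` {0..<r} \<inter> f l' ` {0..<r} = {}) \<and>
        (\<forall>l < s. \<forall>a<r. f l ` {0..<r} \<inter> X a \<noteq> {})"
    proof (intro exI[of _ ff] conjI allI impI)
      fix l assume "l < s" then show "ff l \<in> M" using ffM by simp
    next
      fix l l' assume l: "l < s" and l': "l' < s" and ne: "l \<noteq> l'"
      have inje: "inj_on e {0..<s}" using e bij_betw_def by blast
      have ee: "e l \<noteq> e l'"
      proof
        assume "e l = e l'"
        then have "l = l'" using inj_onD[OF inje] l l' by simp
        then show False using ne by simp
      qed
      have ww: "w l \<noteq> w l'"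
      proof
        assume "w l = w l'"
        then have "l = l'" using inj_onD[OF w(2)] l l' by simp
        then show False using ne by simp
      qed
      have d1: "e l ` {0..<k} \<inter> e l' ` {0..<k} = {}" using coh_disj[OF cohJ eJ[OF l] eJ[OF l'] ee] .
      have d2: "w l \<notin> e l' ` {0..<k}" using upd_notin[OF M updM[OF eJ[OF l'] wT[OF l]] kr] .
      have d3: "w l' \<notin> e l ` {0..<k}" using upd_notin[OF M updM[OF eJ[OF l] wT[OF l']] kr] .
      show "ff l ` {0..<r} \<inter> ff l' ` {0..<r} = {}"
        unfolding ffimg
      proof (rule equals0I)
        fix x assume x: "x \<in> insert (w l) (e l ` {0..<k}) \<inter> insert (w l') (e l' ` {0..<k})"
        then have x1: "x = w l \<or> x \<in> e l ` {0..<k}" and x2: "x = w l' \<or> x \<in> e l' ` {0..<k}"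
          by auto
        show False
        proof (cases "x = w l")
          case True
          show False
          proof (cases "x = w l'")
            case True then show False using \<open>x = w l\<close> ww by simp
          next
            case False then have "x \<in> e l' ` {0..<k}" using x2 by simp
            then show False using d2 \<open>x = w l\<close> by simp
          qed
        next
          case False
          then have xa: "x \<in> e l ` {0..<k}" using x1 by simp
          show False
          proof (cases "x = w l'")
            case True then show False using xa d3 by simp
          next
            case False then have "x \<in> e l' ` {0..<k}" using x2 by simp
            then have "x \<in> e l ` {0..<k} \<inter> e l' ` {0..<k}" using xa by (rule IntI[rotated])
            then show False using d1 by simp
          qed
        qed
      qed
    next
      fix l a assume l: "l < s" and a: "a < r"
      show "ff l ` {0..<r} \<inter> X a \<noteq> {}"
      proof (cases "a = k")
        case True
        have "w l \<in> ff l ` {0..<r}" unfolding ffimg by simp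
        moreover have "w l \<in> X a" using True Xk wT[OF l] by simp
        ultimately show ?thesis by blast
      next
        case False
        then have ak: "a < k" using a rk by auto
        have "e l a \<in> X a" unfolding Xi[OF False] using eJ[OF l] by (rule imageI)
        moreover have "e l a \<in> ff l ` {0..<r}" unfolding ffimg using ak by simp
        ultimately show ?thesis by blast
      qed
    qed
  qed
  have iot': "induced_of_type r EH V E (\<lambda>i. if i = r - 1 then t else s) X"
    using iot unfolding sz_def .
  have cov': "covers r EH E M (\<lambda>i. if i = r - 1 then t else s) X"
    using cov unfolding sz_def .
  show ?thesis using tbig iot' cov' by blast
qed


lemma six_r: "6 * r \<le> (2::nat) ^ (r + 2)"
proof (induction r)
  case 0 then show ?case by simp
next
  case (Suc r)
  show ?case
  proof (cases "r = 0")
    case True then show ?thesis by simp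
  next
    case False
    have "(8::nat) \<le> 2 ^ (r + 2)" using power_increasing[of 3 "r+2" "2::nat"] False by simp
    then show ?thesis using Suc by simp
  qed
qed

lemma two_r: "2 * r \<le> (2::nat) ^ r"
proof (induction r)
  case 0 then show ?case by simp
next
  case (Suc r)
  then show ?case by (cases r) auto
qed

lemma six_r5: "r \<ge> 5 \<Longrightarrow> 6 * r \<le> (2::nat) ^ r"
proof (induction r rule: dec_induct)
  case base then show ?case by simp
next
  case (step r)
  have "6 * Suc r = 6 * r + 6" by simp
  also have "\<dots> \<le> 2 ^ r + 2 ^ r"
  proof -
    have "(32::nat) \<le> 2 ^ r" using power_increasing[of 5 r "2::nat"] step by simp
    then show ?thesis using step by simp
  qed
  finally show ?case by simp
qed

lemma P1: "r \<ge> 2 \<Longrightarrow> 2 * r \<le> (2::nat) ^ (r^2 - r)"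
proof -
  assume r: "r \<ge> 2"
  have "r * 2 \<le> r * r" using r by (intro mult_le_mono2) 
  then have "r \<le> r * r - r" by linarith
  then have "r \<le> r^2 - r" by (simp add: power2_eq_square)
  then have "(2::nat) ^ r \<le> 2 ^ (r^2 - r)" by (rule power_increasing) simp
  then show ?thesis by (rule le_trans[OF two_r])
qed

lemma P2: "r \<ge> 2 \<Longrightarrow> (6 * r) ^ (r - 1) \<le> (2::nat) ^ (2 * r^2 - r - 2)"
proof -
  assume r: "r \<ge> 2"
  have "(6 * r) ^ (r - 1) \<le> (2 ^ (r + 2)) ^ (r - 1)" by (rule power_mono[OF six_r]) simp
  also have "\<dots> = 2 ^ ((r + 2) * (r - 1))" by (rule power_mult[symmetric])
  also have "\<dots> \<le> 2 ^ (2 * r^2 - r - 2)"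
  proof (rule power_increasing)
    define q where "q = r - 2"
    have q: "r = q + 2" using r q_def by simp
    show "(r + 2) * (r - 1) \<le> 2 * r^2 - r - 2" unfolding q by (simp add: power2_eq_square algebra_simps)
  qed simp
  finally show ?thesis .
qed

lemma P3: "r \<ge> 3 \<Longrightarrow> (6 * r) ^ (r - 2) * (r + 1) \<le> (2::nat) ^ (r^2 - r + 1)"
proof -
  assume r: "r \<ge> 3"
  consider "r = 3" | "r = 4" | "r \<ge> 5" using r by linarith
  then show ?thesis
  proof cases
    case 1 then show ?thesis by simp
  next
    case 2 then show ?thesis by simp
  next
    case 3
    have "(6 * r) ^ (r - 2) * (r + 1) \<le> (2 ^ r) ^ (r - 2) * 2 ^ r"
    proof (rule mult_mono)
      show "(6 * r) ^ (r - 2) \<le> (2 ^ r) ^ (r - 2)" by (rule power_mono[OF six_r5[OF 3]]) simp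
      show "r + 1 \<le> 2 ^ r" using two_r[of r] r by simp
    qed auto
    also have "\<dots> = 2 ^ (r * (r - 2) + r)" by (simp only: power_mult[symmetric] power_add)
    also have "\<dots> \<le> 2 ^ (r^2 - r + 1)"
    proof (rule power_increasing)
      define q where "q = r - 2"
      have q: "r = q + 2" using r q_def by simp
      show "r * (r - 2) + r \<le> r^2 - r + 1" unfolding q by (simp add: power2_eq_square algebra_simps)
    qed simp
    finally show ?thesis .
  qed
qed

lemma ln_6r: "r \<ge> 2 \<Longrightarrow> ln (6 * real r) \<le> 2 * real r"
proof -
  assume r: "r \<ge> 2"
  have "1 + 2 * real r + (2 * real r)\<^sup>2 / 2 \<le> exp (2 * real r)"
    by (rule exp_lower_Taylor_quadratic) simp
  moreover have "6 * real r \<le> 1 + 2 * real r + (2 * real r)\<^sup>2 / 2"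
  proof -
    have "real r * 2 \<le> real r * real r" using r by (intro mult_left_mono) auto
    then show ?thesis by (simp add: power2_eq_square)
  qed
  ultimately have "6 * real r \<le> exp (2 * real r)" by linarith
  then have "ln (6 * real r) \<le> ln (exp (2 * real r))" using r by (subst ln_le_cancel_iff) auto
  then show ?thesis by simp
qed

lemma numeric:
  fixes c L :: real and r s B :: nat
  assumes r2: "r \<ge> 2" and c0: "0 < c" and c1: "c \<le> 1/2" and s1: "1 \<le> s"
    and sL: "real s \<le> c ^ (r^2) * L"
    and Blo: "4 * real r / c \<le> B" and Bhi: "B \<le> 6 * real r / c"
  shows "real s * real B ^ (r - 1) \<le> c / 2 * exp L"
    and "\<And>m. 1 \<le> m \<Longrightarrow> m \<le> s * B ^ (r - 2) \<Longrightarrow> 3 \<le> r \<Longrightarrow> real m \<le> exp L / real B ^ m"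
    and "exp L powr (1 - c ^ (r - 1)) < exp L / real B ^ s"
    and "real s \<le> exp L / real B ^ s"
proof -
  define q where "q = r - 2"
  have rq: "r = q + 2" using r2 q_def by simp
  have cpow: "c ^ k \<le> (1/2) ^ k" for k using c0 c1 by (intro power_mono) auto
  have cpos: "0 < c ^ k" for k using c0 by simp
  have cnn: "0 \<le> c ^ k" for k using c0 by simp
  have "1 \<le> c ^ (r^2) * L" using s1 sL by linarith
  then have Lbig: "1 / c ^ (r^2) \<le> L" using cpos by (simp add: field_simps)
  have "(2::real) ^ (r^2) = 1 / (1/2) ^ (r^2)" by (simp add: power_one_over)
  also have "\<dots> \<le> 1 / c ^ (r^2)" using cpow cpos by (intro divide_left_mono) auto
  finally have L2: "2 ^ (r^2) \<le> L" using Lbig by linarith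
  have "0 < (2::real) ^ (r^2)" by simp
  then have Lpos: "0 < L" using L2 by linarith
  have sLL: "real s \<le> L"
  proof -
    have "c ^ (r^2) \<le> 1" using c0 c1 by (intro power_le_one) auto
    then have "c ^ (r^2) * L \<le> 1 * L" using Lpos by (intro mult_right_mono) auto
    then show ?thesis using sL by linarith
  qed
  have Bpos: "0 < real B"
  proof -
    have "0 < 4 * real r / c" using r2 c0 by simp
    then show ?thesis using Blo by linarith
  qed
  have B1: "1 \<le> real B"
  proof -
    have "4 * real r \<le> 4 * real r / c" using c0 c1 r2 by (simp add: field_simps)
    then show ?thesis using Blo r2 by linarith
  qed
  have lnB: "ln B \<le> 2 * real r + 1 / c - 1"
  proof -
    have "ln B \<le> ln (6 * real r / c)" using Bhi Bpos by simp
    also have "\<dots> = ln (6 * real r) + ln (1 / c)" using r2 c0 by (simp add: ln_div ln_mult)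
    also have "\<dots> \<le> 2 * real r + (1 / c - 1)"
      using ln_6r[OF r2] ln_le_minus_one[of "1/c"] c0 by (intro add_mono) auto
    finally show ?thesis by simp
  qed
  have lnB0: "0 \<le> ln B" using B1 by simp
  have key3: "c ^ (r^2) * (2 * real r + 1 / c) < c ^ (r - 1)"
  proof -
    have e1: "c ^ (r^2) = c ^ (r - 1) * c ^ (r^2 - r + 1)"
      unfolding rq by (simp add: power_add[symmetric] power2_eq_square algebra_simps)
    have e2: "c ^ (r^2) / c = c ^ (r - 1) * c ^ (r^2 - r)"
    proof -
      have "c ^ (r^2) = c ^ (r - 1) * c ^ (r^2 - r) * c"
        unfolding rq by (simp add: power_add[symmetric] power_Suc2[symmetric] power2_eq_square algebra_simps)
      then show ?thesis using c0 by simp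
    qed
    have t1: "2 * real r * c ^ (r^2 - r + 1) \<le> 1/2"
    proof -
      have "2 * real r \<le> 2 ^ (r^2 - r)" using P1[OF r2] by (metis of_nat_le_iff of_nat_mult of_nat_numeral of_nat_power)
      moreover have "c ^ (r^2 - r + 1) \<le> (1/2) ^ (r^2 - r + 1)" by (rule cpow)
      ultimately have "2 * real r * c ^ (r^2 - r + 1) \<le> 2 ^ (r^2 - r) * (1/2) ^ (r^2 - r + 1)"
        by (rule mult_mono[OF _ _ _ cnn]) auto
      also have "\<dots> = 1/2" by (simp add: power_one_over field_simps)
      finally show ?thesis .
    qed
    have t2: "c ^ (r^2 - r) \<le> 1/4"
    proof -
      have "r^2 - r \<ge> 2" unfolding rq by (simp add: power2_eq_square)
      then have h: "(1/2::real) ^ (r^2 - r) \<le> (1/2) ^ 2" by (intro power_decreasing) auto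
      have "(1/2::real) ^ 2 = 1/4" by (simp add: power2_eq_square)
      then show ?thesis using cpow[of "r^2 - r"] h by linarith
    qed
    have "c ^ (r^2) * (2 * real r + 1 / c) = c ^ (r - 1) * (2 * real r * c ^ (r^2 - r + 1) + c ^ (r^2 - r))"
      using e1 e2 by (simp add: algebra_simps)
    also have "\<dots> \<le> c ^ (r - 1) * (3/4)"
      using t1 t2 cnn[of "r - 1"] by (intro mult_left_mono) auto
    also have "\<dots> < c ^ (r - 1)" using cpos by simp
    finally show ?thesis .
  qed
  have slnB: "s * ln B < c ^ (r - 1) * L"
  proof -
    have "s * ln B \<le> c ^ (r^2) * L * (2 * real r + 1 / c)"
    proof -
      have "s * ln B \<le> c ^ (r^2) * L * ln B" using sL lnB0 by (intro mult_right_mono) auto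
      also have "\<dots> \<le> c ^ (r^2) * L * (2 * real r + 1 / c)"
        using lnB Lpos cnn[of "r^2"] by (intro mult_left_mono) auto
      finally show ?thesis .
    qed
    also have "\<dots> = (c ^ (r^2) * (2 * real r + 1 / c)) * L" by simp
    also have "\<dots> < c ^ (r - 1) * L" using key3 Lpos by (intro mult_strict_right_mono) auto
    finally show ?thesis .
  qed
  have expB: "exp L / real B ^ s = exp (L - s * ln B)"
    using Bpos by (simp add: exp_diff exp_of_nat_mult)
  show N3: "exp L powr (1 - c ^ (r - 1)) < exp L / real B ^ s"
  proof -
    have "exp L powr (1 - c ^ (r - 1)) = exp ((1 - c ^ (r - 1)) * L)" by (simp add: powr_def)
    also have "\<dots> < exp (L - s * ln B)" using slnB by (simp add: algebra_simps)
    finally show ?thesis using expB by simp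
  qed
  show "real s \<le> exp L / real B ^ s"
  proof -
    have "c ^ (r - 1) \<le> 1/2"
    proof -
      have "c ^ (r - 1) \<le> c ^ 1" using c0 c1 r2 by (intro power_decreasing) auto
      then show ?thesis using c1 by simp
    qed
    then have "L * c ^ (r - 1) \<le> L * (1/2)" using Lpos by (intro mult_left_mono) auto
    then have "L / 2 \<le> (1 - c ^ (r - 1)) * L" by (simp add: algebra_simps)
    then have "exp (L / 2) \<le> exp L powr (1 - c ^ (r - 1))" by (simp add: powr_def mult.commute)
    moreover have "L \<le> exp (L / 2)"
    proof -
      have "1 + L / 2 + (L / 2)\<^sup>2 / 2 \<le> exp (L / 2)" using Lpos by (intro exp_lower_Taylor_quadratic) auto
      moreover have "L \<le> 1 + L / 2 + (L / 2)\<^sup>2 / 2"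
        using sum_squares_ge_zero[of "L/2 - 1" 0] by (simp add: power2_eq_square algebra_simps)
      ultimately show ?thesis by linarith
    qed
    ultimately show ?thesis using N3 sLL by linarith
  qed
  show "real s * real B ^ (r - 1) \<le> c / 2 * exp L"
  proof -
    define a where "a = r^2 - r"
    have ex1: "r^2 = a + (r - 1) + 1" unfolding a_def rq by (simp add: power2_eq_square)
    have ex2: "2 * r^2 - r - 2 + 2 = r^2 + a" unfolding a_def rq by (simp add: power2_eq_square)
    have Bp: "real B ^ (r - 1) \<le> (6 * real r / c) ^ (r - 1)" using Bhi Bpos by (intro power_mono) auto
    have e: "c ^ (r^2) * (6 * real r / c) ^ (r - 1) * (2 / c) = 2 * (6 * real r) ^ (r - 1) * c ^ a"
    proof -
      have c2: "c ^ (r^2) = c ^ a * c ^ (r - 1) * c" by (simp only: ex1 power_add power_one_right)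
      have A: "(6 * real r / c) ^ (r - 1) * c ^ (r - 1) = (6 * real r) ^ (r - 1)"
        using c0 by (simp add: power_divide)
      have B: "c * (2 / c) = 2" using c0 by simp
      have "c ^ (r^2) * (6 * real r / c) ^ (r - 1) * (2 / c)
          = c ^ a * ((6 * real r / c) ^ (r - 1) * c ^ (r - 1)) * (c * (2 / c))"
        unfolding c2 by (simp only: mult_ac)
      also have "\<dots> = 2 * (6 * real r) ^ (r - 1) * c ^ a" unfolding A B by (simp only: mult_ac)
      finally show ?thesis .
    qed
    have sB: "real s * real B ^ (r - 1) \<le> c ^ (r^2) * L * (6 * real r / c) ^ (r - 1)"
      using sL Bp by (rule mult_mono) (use cnn Lpos Bpos in auto)
    have "real s * real B ^ (r - 1) * (2 / c) \<le> c ^ (r^2) * L * (6 * real r / c) ^ (r - 1) * (2 / c)"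
      using sB c0 by (intro mult_right_mono) auto
    also have "\<dots> = L * (c ^ (r^2) * (6 * real r / c) ^ (r - 1) * (2 / c))" by (simp only: mult_ac)
    also have "\<dots> = L * (2 * (6 * real r) ^ (r - 1) * c ^ a)" unfolding e ..
    also have "\<dots> \<le> L * (2 ^ (r^2) / 2)"
    proof (rule mult_left_mono)
      have P: "(6 * real r) ^ (r - 1) \<le> 2 ^ (2 * r^2 - r - 2)"
      proof -
        have "real ((6 * r) ^ (r - 1)) \<le> real (2 ^ (2 * r^2 - r - 2))" using P2[OF r2] by (rule of_nat_mono)
        then show ?thesis by simp
      qed
      have ca: "c ^ a \<le> 1 / 2 ^ a" using cpow[of a] by (simp add: power_one_over)
      have "2 * (6 * real r) ^ (r - 1) * c ^ a \<le> 2 * 2 ^ (2 * r^2 - r - 2) * (1 / 2 ^ a)"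
        using P ca by (intro mult_mono) (auto simp: cnn)
      also have "\<dots> = 2 ^ (r^2) / 2"
      proof -
        have "(2::real) * 2 ^ (2 * r^2 - r - 2) * 2 = 2 ^ (2 * r^2 - r - 2 + 2)" by (simp add: power_add)
        also have "\<dots> = 2 ^ (r^2) * 2 ^ a" unfolding ex2 by (simp add: power_add)
        finally have "(2::real) * 2 ^ (2 * r^2 - r - 2) * 2 = 2 ^ (r^2) * 2 ^ a" .
        then show ?thesis by (simp add: field_simps)
      qed
      finally show "2 * (6 * real r) ^ (r - 1) * c ^ a \<le> 2 ^ (r^2) / 2" .
    qed (use Lpos in simp)
    also have "\<dots> \<le> L * (L / 2)" using L2 Lpos by (intro mult_left_mono) auto
    also have "\<dots> \<le> exp L"
    proof -
      have "1 + L + L\<^sup>2 / 2 \<le> exp L" using Lpos by (intro exp_lower_Taylor_quadratic) auto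
      then show ?thesis using Lpos by (simp add: power2_eq_square)
    qed
    finally have "real s * real B ^ (r - 1) * (2 / c) \<le> exp L" .
    then have "real s * real B ^ (r - 1) * (2 / c) * (c / 2) \<le> exp L * (c / 2)" using c0 by (intro mult_right_mono) auto
    moreover have "real s * real B ^ (r - 1) * (2 / c) * (c / 2) = real s * real B ^ (r - 1)" using c0 by simp
    ultimately show ?thesis by (simp add: mult.commute)
  qed
  fix m assume m1: "1 \<le> m" and mle: "m \<le> s * B ^ (r - 2)" and r3: "3 \<le> r"
  have m2L: "real (s * B ^ (r - 2)) * (1 + ln B) \<le> L"
  proof -
    have Bp: "real B ^ (r - 2) \<le> (6 * real r / c) ^ (r - 2)" using Bhi Bpos by (intro power_mono) auto
    have lB: "1 + ln B \<le> (real r + 1) / c"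
    proof -
      have "real r * (2 * c) \<le> real r * 1" using c1 by (intro mult_left_mono) auto
      then have "2 * real r * c \<le> real r" by (simp add: algebra_simps)
      then have "2 * real r \<le> real r / c" using c0 by (simp add: pos_le_divide_eq)
      then show ?thesis using lnB c0 by (simp add: add_divide_distrib)
    qed
    have e: "c ^ (r^2) * (6 * real r / c) ^ (r - 2) * ((real r + 1) / c) = (6 * real r) ^ (r - 2) * (real r + 1) * c ^ (r^2 - r + 1)"
    proof -
      have "c ^ (r^2) = c ^ (r^2 - r + 1) * c ^ (r - 2) * c"
        unfolding rq by (simp add: power_add[symmetric] power_Suc2[symmetric] power2_eq_square algebra_simps)
      then show ?thesis using c0 by (simp add: power_divide field_simps)
    qed
    have "real (s * B ^ (r - 2)) * (1 + ln B) \<le> c ^ (r^2) * L * (6 * real r / c) ^ (r - 2) * ((real r + 1) / c)"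
      using sL Bp lB lnB0 c0 cpos Lpos by (simp only: of_nat_mult of_nat_power) (intro mult_mono, auto)
    also have "\<dots> = L * ((6 * real r) ^ (r - 2) * (real r + 1) * c ^ (r^2 - r + 1))" using e by (simp add: algebra_simps)
    also have "\<dots> \<le> L * ((6 * real r) ^ (r - 2) * (real r + 1) * (1/2) ^ (r^2 - r + 1))"
      by (rule mult_left_mono[OF mult_left_mono[OF cpow]]) (use Lpos in auto)
    also have "\<dots> \<le> L * 1"
    proof (intro mult_left_mono)
      have "(6 * real r) ^ (r - 2) * (real r + 1) \<le> 2 ^ (r^2 - r + 1)"
      proof -
        have "real ((6 * r) ^ (r - 2) * (r + 1)) \<le> real (2 ^ (r^2 - r + 1))" using P3[OF r3] by (rule of_nat_mono)
        then show ?thesis by (simp only: of_nat_mult of_nat_power of_nat_add of_nat_numeral of_nat_1)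
      qed
      then have "(6 * real r) ^ (r - 2) * (real r + 1) * (1/2) ^ (r^2 - r + 1) \<le> 2 ^ (r^2 - r + 1) * (1/2) ^ (r^2 - r + 1)"
        by (intro mult_right_mono) auto
      also have "\<dots> = 1" by (simp add: power_one_over)
      finally show "(6 * real r) ^ (r - 2) * (real r + 1) * (1/2) ^ (r^2 - r + 1) \<le> 1" .
    qed (use Lpos in auto)
    finally show ?thesis by simp
  qed
  have "ln (real m) + m * ln B \<le> L"
  proof -
    have "ln (real m) \<le> real m" using m1 by (simp add: ln_le_minus_one order.trans[OF ln_le_minus_one])
    then have "ln (real m) + m * ln B \<le> real m * (1 + ln B)" by (simp add: algebra_simps)
    also have "\<dots> \<le> real (s * B ^ (r - 2)) * (1 + ln B)"
    proof (rule mult_right_mono)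
      show "real m \<le> real (s * B ^ (r - 2))" using mle by (rule of_nat_mono)
    qed (use lnB0 in auto)
    finally show ?thesis using m2L by linarith
  qed
  then have "exp (ln (real m) + m * ln B) \<le> exp L" by simp
  then have "real m * real B ^ m \<le> exp L" using m1 Bpos by (simp add: exp_add exp_of_nat_mult)
  then show "real m \<le> exp L / real B ^ m" using Bpos by (simp add: field_simps)
qed

theorem theorem3:
  fixes r n :: nat and c :: real and EH :: "nat \<Rightarrow> nat \<Rightarrow> bool"
    and V :: "'a set" and E :: "'a \<Rightarrow> 'a \<Rightarrow> bool" and M :: "(nat \<Rightarrow> 'a) set"
  assumes "r \<ge> 2" and "0 < c" and "c \<le> 1/2"
    and "graph {0..<r} EH"
    and "graph V E" and "card V = n" and "n \<ge> 1"
    and "M \<subseteq> induced_copies r EH V E"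
    and "real (card M) \<ge> c * real n ^ r"
  shows "\<exists>(t::nat) X. real t > real n powr (1 - c ^ (r - 1)) \<and>
           (let s = nat \<lfloor>c ^ (r^2) * ln (real n)\<rfloor>;
                sz = (\<lambda>i. if i = r - 1 then t else s)
            in induced_of_type r EH V E sz X \<and> covers r EH E M sz X)"
proof -
  have fV: "finite V" using assms(5) unfolding graph_def by simp
  have M: "M \<subseteq> induced_copies r EH V E" using assms(8) .
  have Msub: "M \<subseteq> {0..<r} \<rightarrow>\<^sub>E V" using ic_PiE[OF M] .
  have r2: "r \<ge> 2" and c0: "0 < c" and c1: "c \<le> 1/2" using assms by auto
  have n1: "n \<ge> 1" using assms by simp
  have cardV: "card V = n" using assms by simp
  have "0 < c * real n ^ r" using c0 n1 by simp
  then have "card M > 0" using assms(9) by linarith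
  then obtain h where hM: "h \<in> M" by (metis card.empty ex_in_conv less_irrefl)
  have "inj_on h {0..<r}" using M_inj[OF M hM] .
  moreover have "h ` {0..<r} \<subseteq> V" using hM Msub by auto
  ultimately have "card {0..<r} \<le> card V" using card_inj_on_le fV by blast
  then have nr: "r \<le> n" using cardV by simp
  then have n2: "n \<ge> 2" using r2 by simp
  define s where "s = nat \<lfloor>c ^ (r^2) * ln (real n)\<rfloor>"
  have goal: "\<exists>(t::nat) X. real t > real n powr (1 - c ^ (r - 1)) \<and>
      induced_of_type r EH V E (\<lambda>i. if i = r - 1 then t else s) X \<and>
      covers r EH E M (\<lambda>i. if i = r - 1 then t else s) X"
  proof (cases "s = 0")
    case True
    define X :: "nat \<Rightarrow> 'a set" where "X = (\<lambda>i. if i = r - 1 then V else {})"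
    define sz where "sz = (\<lambda>i. if i = r - 1 then n else s)"
    have big: "real n > real n powr (1 - c ^ (r - 1))"
    proof -
      have "1 - c ^ (r - 1) < 1" using c0 by simp
      moreover have "1 < real n" using n2 by simp
      ultimately have "real n powr (1 - c ^ (r - 1)) < real n powr 1" by (rule powr_less_mono)
      then show ?thesis using n2 by simp
    qed
    have empty: "i \<noteq> r - 1 \<Longrightarrow> X i = {}" for i unfolding X_def by simp
    have iot: "induced_of_type r EH V E sz X"
      unfolding induced_of_type_def
    proof (intro conjI allI impI ballI)
      fix i assume "i < r"
      show "X i \<subseteq> V" unfolding X_def by simp
      show "finite (X i)" unfolding X_def using fV by simp
      show "card (X i) = sz i" unfolding X_def sz_def using cardV True by simp
    next
      fix i j assume "i < r" "j < r" "i \<noteq> j"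
      then have "X i = {} \<or> X j = {}" using empty by metis
      then show "X i \<inter> X j = {}" by auto
    next
      fix i j x y assume "i < r" "j < r" "i \<noteq> j" "x \<in> X i" "y \<in> X j"
      then have "X i = {} \<or> X j = {}" using empty by metis
      then show "E x y \<longleftrightarrow> EH i j" using \<open>x \<in> X i\<close> \<open>y \<in> X j\<close> by auto
    qed
    have Min0: "Min (sz ` {0..<r}) = 0"
    proof -
      have "sz 0 = 0" unfolding sz_def using True r2 by simp
      then have "0 \<in> sz ` {0..<r}" using r2 by (metis atLeastLessThan_iff image_eqI le0 less_le_trans zero_less_numeral pos2)
      then show ?thesis by (meson Min_le finite_atLeastLessThan finite_imageI le_zero_eq)
    qed
    have cov: "covers r EH E M sz X"
      unfolding covers_def Min0
    proof (intro conjI)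
      show "\<forall>a<r. \<forall>b<r. a \<noteq> b \<longrightarrow> (\<forall>x\<in>X a. \<forall>y\<in>X b. E x y \<longrightarrow>
          (\<exists>h\<in>M. \<exists>u<r. \<exists>v<r. EH u v \<and> {h u, h v} = {x, y}))"
      proof (intro allI impI ballI)
        fix a b x y assume "a < r" "b < r" "a \<noteq> b" "x \<in> X a" "y \<in> X b" "E x y"
        then have "X a = {} \<or> X b = {}" using empty by metis
        then show "\<exists>h\<in>M. \<exists>u<r. \<exists>v<r. EH u v \<and> {h u, h v} = {x, y}"
          using \<open>x \<in> X a\<close> \<open>y \<in> X b\<close> by auto
      qed
      show "\<exists>f :: nat \<Rightarrow> nat \<Rightarrow> 'a. (\<forall>k < 0. f k \<in> M) \<and>
          (\<forall>k < 0. \<forall>l < 0. k \<noteq> l \<longrightarrow> f k ` {0..<r} \<inter> f l ` {0..<r} = {}) \<and>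
          (\<forall>k < 0. \<forall>a<r. f k ` {0..<r} \<inter> X a \<noteq> {})" by simp
    qed
    show ?thesis using big iot cov unfolding sz_def by blast
  next
    case False
    then have s1: "1 \<le> s" by simp
    define L where "L = ln (real n)"
    have expL: "exp L = real n" unfolding L_def using n1 by simp
    have sL: "real s \<le> c ^ (r^2) * L"
    proof -
      have "0 \<le> c ^ (r^2) * L" unfolding L_def using c0 n1 by simp
      then show ?thesis unfolding s_def L_def by linarith
    qed
    define N where "N = nat \<lceil>1 / c\<rceil>"
    have N1: "1 / c \<le> real N" unfolding N_def by linarith
    have N2: "real N \<le> 3 / (2 * c)"
    proof -
      have "0 < 1 / c" using c0 by simp
      then have "0 \<le> \<lceil>1 / c\<rceil>" by (meson ceiling_correct of_int_0_le_iff less_le_trans order.strict_implies_order)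
      then have "real N = real_of_int \<lceil>1 / c\<rceil>" unfolding N_def by simp
      then have "real N < 1 / c + 1" using ceiling_correct[of "1 / c"] by linarith
      moreover have "1 \<le> 1 / (2 * c)" using c0 c1 by (simp add: field_simps)
      moreover have "1 / c + 1 / (2 * c) = 3 / (2 * c)" using c0 by (simp add: field_simps)
      ultimately show ?thesis by linarith
    qed
    define B where "B = 4 * r * N"
    have Blo: "4 * real r / c \<le> real B"
    proof -
      have "4 * real r * (1 / c) \<le> 4 * real r * real N" using N1 by (intro mult_left_mono) auto
      then show ?thesis unfolding B_def by simp
    qed
    have Bhi: "real B \<le> 6 * real r / c"
    proof -
      have "4 * real r * real N \<le> 4 * real r * (3 / (2 * c))" using N2 by (intro mult_left_mono) auto
      also have "\<dots> = 6 * real r / c" using c0 by (simp add: field_simps)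
      finally show ?thesis unfolding B_def by simp
    qed
    have Bpos: "0 < real B"
    proof -
      have "0 < 4 * real r / c" using r2 c0 by simp
      then show ?thesis using Blo by linarith
    qed
    have B1: "B \<ge> 1" using Bpos by simp
    define th where "th = (2 / real B) * real (card V)"
    have thpos: "0 < th" unfolding th_def using Bpos cardV n1 by simp
    note numer = numeric[OF r2 c0 c1 s1 sL Blo Bhi]
    have dens: "(c - real (r - 1) * (2 / real B)) * real (card V) ^ 1 \<le> card (PP r V th M 1)"
      using PP_dens[OF fV _ Msub th_def _ _, of c 1] cardV n1 Bpos assms(9) r2 by simp
    have eps: "real (r - 1) * (2 / real B) \<le> c / 2"
    proof -
      have "real (r - 1) * (2 / real B) \<le> real r * (2 / real B)" using Bpos by (intro mult_right_mono) auto
      also have "\<dots> = 2 * real r / real B" by simp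
      also have "\<dots> \<le> 2 * real r / (4 * real r / c)"
        using Blo r2 c0 Bpos by (intro divide_left_mono) (auto intro!: mult_pos_pos divide_pos_pos)
      also have "\<dots> = c / 2" using r2 c0 by (simp add: field_simps)
      finally show ?thesis .
    qed
    have base: "s * B ^ (r - 1) \<le> card (PP r V th M 1)"
    proof -
      have "real s * real B ^ (r - 1) \<le> c / 2 * exp L" by (rule numer(1))
      also have "\<dots> = (c - c / 2) * real (card V)" using expL cardV by simp
      also have "\<dots> \<le> (c - real (r - 1) * (2 / real B)) * real (card V)"
        using eps by (intro mult_right_mono) auto
      also have "\<dots> \<le> card (PP r V th M 1)" using dens by simp
      finally have h: "real s * real B ^ (r - 1) \<le> real (card (PP r V th M 1))" .
      have "real (s * B ^ (r - 1)) \<le> real (card (PP r V th M 1))" using h by simp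
      then show ?thesis by (simp only: of_nat_le_iff)
    qed
    have grow: "real (s * B ^ (r - k)) \<le> real (card V) / real (B ^ (s * B ^ (r - k)))"
      if k: "2 \<le> k" "k < r" for k
    proof -
      have m1: "1 \<le> s * B ^ (r - k)" using s1 B1 by (simp add: Suc_le_eq)
      have "B ^ (r - k) \<le> B ^ (r - 2)" using B1 k by (intro power_increasing) auto
      then have mle: "s * B ^ (r - k) \<le> s * B ^ (r - 2)" by simp
      have "real (s * B ^ (r - k)) \<le> exp L / real B ^ (s * B ^ (r - k))"
        by (rule numer(2)[OF m1 mle]) (use k in auto)
      then show ?thesis using expL cardV by simp
    qed
    have fin1: "real (card V) powr (1 - c ^ (r - 1)) < real (card V) / real (B ^ s)"
      using numer(3) expL cardV by simp
    have fin2: "real s \<le> real (card V) / real (B ^ s)"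
      using numer(4) expL cardV by simp
    show ?thesis using final[OF M fV r2 th_def B1 thpos s1 base grow fin1 fin2] cardV by simp
  qed
  then show ?thesis unfolding Let_def s_def .
qed

end
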